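(* Let $f,g\in G_{mn}$ satisfy $l(f)=l(g)>1$ and suppose $f$ and $g$ are not $H$-conjugate. Then there exists an integer $t>1$ such that $f\rho_t$ and $g\rho_t$ are not $H(t)$-conjugate in $G_{mn}(t)$.
   Context: Fix integers $m,n>1$ and let $G_{mn}=\langle a,b;\ [a^m,b^n]=1\rangle$. Put $c=a^m$, $d=b^n$, $H=\langle c,d\rangle$, $A=\langle a,H\rangle$, $B=\langle b,H\rangle$; then $G_{mn}=(A*B;\ H)$. For an integer $t>1$ let $G_{mn}(t)=\langle a,b;\ [a^m,b^n]=1,\ a^{mt}=b^{nt}=1\rangle$, $\rho_t:G_{mn}\to G_{mn}(t)$ the natural homomorphism, $H(t)=H\rho_t$. The length $l(g)$ is the number of components of a reduced form of $g$ in $(A*B;\ H)$ (a reduced form is $x_1\cdots x_r$ with each $x_i$ in $A$ or $B$ and, when $r>1$, consecutive components in different factors). For a subgroup $X$ of $Y$, $u,v\in Y$ are $X$-conjugate if $u=x^{-1}vx$ for some $x\in X$. *)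

theory Defs
  imports Main
begin

text \<open>Words over the generators a (False) and b (True); a letter is a generator
  together with an exponent sign (True = inverse).\<close>

type_synonym letter = "bool \<times> bool"
type_synonym word = "letter list"

definition flip :: "letter \<Rightarrow> letter" where
  "flip x = (fst x, \<not> snd x)"

definition winv :: "word \<Rightarrow> word" where
  "winv w = rev (map flip w)"

definition gen_a :: letter where "gen_a = (False, False)"
definition gen_b :: letter where "gen_b = (True, False)"

inductive eqp :: "word set \<Rightarrow> word \<Rightarrow> word \<Rightarrow> bool" for R :: "word set" where
  refl: "eqp R w w"
| sym: "eqp R w v \<Longrightarrow> eqp R v w"
| trans: "eqp R u v \<Longrightarrow> eqp R v w \<Longrightarrow> eqp R u w"
| cancel: "eqp R (u @ [x, flip x] @ v) (u @ v)"
| rel: "r \<in> R \<Longrightarrow> eqp R (u @ r @ v) (u @ v)"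

inductive_set gen_words :: "word set \<Rightarrow> word set" for S :: "word set" where
  nil: "[] \<in> gen_words S"
| gen: "s \<in> S \<Longrightarrow> w \<in> gen_words S \<Longrightarrow> s @ w \<in> gen_words S"
| geninv: "s \<in> S \<Longrightarrow> w \<in> gen_words S \<Longrightarrow> winv s @ w \<in> gen_words S"

definition in_sub :: "word set \<Rightarrow> word set \<Rightarrow> word \<Rightarrow> bool" where
  "in_sub R S w \<longleftrightarrow> (\<exists>u \<in> gen_words S. eqp R w u)"

definition c_word :: "nat \<Rightarrow> word" where "c_word m = replicate m gen_a"
definition d_word :: "nat \<Rightarrow> word" where "d_word n = replicate n gen_b"

definition commutator :: "word \<Rightarrow> word \<Rightarrow> word" where
  "commutator x y = winv x @ winv y @ x @ y"

definition rels_G :: "nat \<Rightarrow> nat \<Rightarrow> word set" where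
  "rels_G m n = {commutator (c_word m) (d_word n)}"

definition rels_Gt :: "nat \<Rightarrow> nat \<Rightarrow> nat \<Rightarrow> word set" where
  "rels_Gt m n t = {commutator (c_word m) (d_word n),
                    replicate (m * t) gen_a, replicate (n * t) gen_b}"

definition inH :: "nat \<Rightarrow> nat \<Rightarrow> word \<Rightarrow> bool" where
  "inH m n w = in_sub (rels_G m n) {c_word m, d_word n} w"
definition inA :: "nat \<Rightarrow> nat \<Rightarrow> word \<Rightarrow> bool" where
  "inA m n w = in_sub (rels_G m n) {[gen_a], c_word m, d_word n} w"
definition inB :: "nat \<Rightarrow> nat \<Rightarrow> word \<Rightarrow> bool" where
  "inB m n w = in_sub (rels_G m n) {[gen_b], c_word m, d_word n} w"

definition reduced_form :: "nat \<Rightarrow> nat \<Rightarrow> word \<Rightarrow> word list \<Rightarrow> bool" where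
  "reduced_form m n g xs \<longleftrightarrow>
     eqp (rels_G m n) (concat xs) g \<and>
     (\<forall>x \<in> set xs. inA m n x \<or> inB m n x) \<and>
     (length xs > 1 \<longrightarrow>
        (\<forall>i. Suc i < length xs \<longrightarrow>
           (inA m n (xs ! i) \<and> \<not> inH m n (xs ! i) \<and>
            inB m n (xs ! Suc i) \<and> \<not> inH m n (xs ! Suc i)) \<or>
           (inB m n (xs ! i) \<and> \<not> inH m n (xs ! i) \<and>
            inA m n (xs ! Suc i) \<and> \<not> inH m n (xs ! Suc i))))"

definition elength :: "nat \<Rightarrow> nat \<Rightarrow> word \<Rightarrow> nat" where
  "elength m n g = (LEAST r. \<exists>xs. length xs = r \<and> reduced_form m n g xs)"

definition sub_conj :: "word set \<Rightarrow> word set \<Rightarrow> word \<Rightarrow> word \<Rightarrow> bool" where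
  "sub_conj R S u v \<longleftrightarrow> (\<exists>x \<in> gen_words S. eqp R u (winv x @ v @ x))"

end

theory Submission
  imports Defs
begin

type_synonym syl = "bool \<times> int \<times> int"
type_synonym nf = "(int \<times> int) \<times> syl list"

definition md :: "nat \<Rightarrow> int \<Rightarrow> int" where "md T x = x mod int T"

fun mA :: "nat \<Rightarrow> nat \<Rightarrow> int \<Rightarrow> nf \<Rightarrow> nf" where
  "mA T m e ((p,q), []) =
     (if e mod int m = 0 then ((md T (p + e div int m), q), [])
      else ((md T (p + e div int m), 0), [(False, e mod int m, q)]))"
| "mA T m e ((p,q), (t,r,s) # ys) =
     (if q \<noteq> 0 \<or> t then
        (if e mod int m = 0 then ((md T (p + e div int m), q), (t,r,s) # ys)
         else ((md T (p + e div int m), 0), (False, e mod int m, q) # (t,r,s) # ys))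
      else
        (if (e + r) mod int m = 0 then ((md T (p + (e + r) div int m), s), ys)
         else ((md T (p + (e + r) div int m), 0), (False, (e + r) mod int m, s) # ys)))"

fun mB :: "nat \<Rightarrow> nat \<Rightarrow> int \<Rightarrow> nf \<Rightarrow> nf" where
  "mB T n e ((p,q), []) =
     (if e mod int n = 0 then ((p, md T (q + e div int n)), [])
      else ((0, md T (q + e div int n)), [(True, e mod int n, p)]))"
| "mB T n e ((p,q), (t,r,s) # ys) =
     (if p \<noteq> 0 \<or> \<not> t then
        (if e mod int n = 0 then ((p, md T (q + e div int n)), (t,r,s) # ys)
         else ((0, md T (q + e div int n)), (True, e mod int n, p) # (t,r,s) # ys))
      else
        (if (e + r) mod int n = 0 then ((s, md T (q + (e + r) div int n)), ys)
         else ((0, md T (q + (e + r) div int n)), (True, (e + r) mod int n, s) # ys)))"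

fun vs :: "nat \<Rightarrow> nat \<Rightarrow> nat \<Rightarrow> syl list \<Rightarrow> bool" where
  "vs T m n [] = True"
| "vs T m n ((t,r,s) # ys) = (md T s = s \<and> 0 < r \<and> r < (if t then int n else int m) \<and>
      (case ys of [] \<Rightarrow> True | (t',_) # _ \<Rightarrow> (t' = t \<longrightarrow> s \<noteq> 0)) \<and> vs T m n ys)"

fun valid :: "nat \<Rightarrow> nat \<Rightarrow> nat \<Rightarrow> nf \<Rightarrow> bool" where
  "valid T m n ((p,q), ys) = (md T p = p \<and> md T q = q \<and> vs T m n ys)"

fun tr :: "nat \<Rightarrow> int \<times> int \<Rightarrow> nf \<Rightarrow> nf" where
  "tr T (i,j) ((p,q), ys) = ((md T (p + i), md T (q + j)), ys)"

definition sg :: "letter \<Rightarrow> int" where "sg x = (if snd x then -1 else 1)"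
definition act1 :: "nat \<Rightarrow> nat \<Rightarrow> nat \<Rightarrow> letter \<Rightarrow> nf \<Rightarrow> nf" where
  "act1 T m n x nf = (if fst x then mB T n (sg x) nf else mA T m (sg x) nf)"
definition act :: "nat \<Rightarrow> nat \<Rightarrow> nat \<Rightarrow> word \<Rightarrow> nf \<Rightarrow> nf" where
  "act T m n w nf = foldr (act1 T m n) w nf"

lemma act_Nil[simp]: "act T m n [] nf = nf" by (simp add: act_def)
lemma act_Cons[simp]: "act T m n (x # w) nf = act1 T m n x (act T m n w nf)" by (simp add: act_def)
lemma act_append[simp]: "act T m n (u @ v) nf = act T m n u (act T m n v nf)" by (simp add: act_def)

lemma nf_ex: obtains p q ys where "nf = ((p,q),ys)" by (metis prod.exhaust)

fun rml :: "nat \<Rightarrow> syl list \<Rightarrow> int \<times> int \<Rightarrow> syl list \<times> (int \<times> int)" where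
  "rml T [] v = ([], v)"
| "rml T ((t,r,s) # ys) v = (case rml T ys v of (ys', (i,j)) \<Rightarrow>
      if t then ((t, r, md T (s + i)) # ys', (0, j)) else ((t, r, md T (s + j)) # ys', (i, 0)))"

fun rmul :: "nat \<Rightarrow> nf \<Rightarrow> int \<times> int \<Rightarrow> nf" where
  "rmul T ((p,q),ys) v = (case rml T ys v of (ys', (i,j)) \<Rightarrow> ((md T (p + i), md T (q + j)), ys'))"

lemma md_0[simp]: "md T 0 = 0" by (simp add: md_def)
fun mdl :: "nat \<Rightarrow> syl list \<Rightarrow> syl list" where
  "mdl T [] = []"
| "mdl T ((t,r,s) # ys) = (t, r, md T s) # mdl T ys"

fun md_nf :: "nat \<Rightarrow> nf \<Rightarrow> nf" where
  "md_nf T ((p,q),ys) = ((md T p, md T q), mdl T ys)"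

fun sb :: "syl list \<Rightarrow> int" where
  "sb [] = 0"
| "sb ((t,r,s) # ys) = max \<bar>s\<bar> (sb ys)"

fun eb :: "nf \<Rightarrow> int" where
  "eb ((p,q),ys) = max (max \<bar>p\<bar> \<bar>q\<bar>) (sb ys)"

fun zb :: "nf \<Rightarrow> int" where
  "zb ((p,q),ys) = max \<bar>p\<bar> \<bar>q\<bar>"

lemma md0[simp]: "md 0 x = x" by (simp add: md_def)
lemma md_small: "\<bar>x\<bar> < int T \<Longrightarrow> md T x = 0 \<longleftrightarrow> x = 0"
proof
  assume a: "\<bar>x\<bar> < int T" "md T x = 0"
  then have "int T dvd x" by (simp add: md_def dvd_eq_mod_eq_0)
  then show "x = 0" using a(1) dvd_imp_le_int[of x "int T"] by fastforce
qed (simp)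

lemma md_inj: assumes "md T a = md T b" "\<bar>a\<bar> \<le> K" "\<bar>b\<bar> \<le> K" "2 * K < int T" shows "a = b"
proof -
  have "int T dvd (a - b)" using assms(1) by (simp add: md_def mod_eq_dvd_iff)
  moreover have "\<bar>a - b\<bar> < int T" using assms by linarith
  ultimately show ?thesis using dvd_imp_le_int[of "a - b" "int T"] by fastforce
qed

lemma md_diffR[simp]: "md T (x - md T y) = md T (x - y)" by (simp add: md_def mod_diff_right_eq)
lemma md_diffL[simp]: "md T (md T x - y) = md T (x - y)" by (simp add: md_def mod_diff_left_eq)
lemma md_minus[simp]: "md T (- md T x) = md T (- x)" by (simp add: md_def mod_minus_eq)
lemma md_md[simp]: "md T (md T x) = md T x" by (simp add: md_def)
lemma md_addL[simp]: "md T (md T x + y) = md T (x + y)" by (simp add: md_def mod_add_left_eq)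
lemma md_addR[simp]: "md T (x + md T y) = md T (x + y)" by (simp add: md_def mod_add_right_eq)

lemma divmod_add:
  assumes "(0::int) < k"
  shows "(e1 + e2 mod k) div k + e2 div k = (e1 + e2) div k"
    and "(e1 + e2 mod k) mod k = (e1 + e2) mod k"
proof -
  have eq: "e1 + e2 = (e1 + e2 mod k) + k * (e2 div k)" by simp
  have "(e1 + e2) div k = ((e1 + e2 mod k) + k * (e2 div k)) div k" by (rule arg_cong[OF eq])
  also have "\<dots> = e2 div k + (e1 + e2 mod k) div k"
    using assms by (subst div_mult_self2) auto
  finally show "(e1 + e2 mod k) div k + e2 div k = (e1 + e2) div k" by simp
  show "(e1 + e2 mod k) mod k = (e1 + e2) mod k" by (simp add: mod_add_right_eq)
qed

lemma mod_pos_ne: "(0::int) < k \<Longrightarrow> x mod k \<noteq> 0 \<Longrightarrow> 0 < x mod k"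
  using pos_mod_sign[of k x] by linarith

lemma flip_flip[simp]: "flip (flip x) = x" by (simp add: flip_def)
lemma winv_Nil[simp]: "winv [] = []" by (simp add: winv_def)
lemma winv_Cons[simp]: "winv (x # w) = winv w @ [flip x]" by (simp add: winv_def)
lemma winv_append[simp]: "winv (u @ v) = winv v @ winv u" by (simp add: winv_def)
lemma winv_winv[simp]: "winv (winv u) = u" by (simp add: winv_def rev_map comp_def)

lemma eqp_cong: "eqp R u v \<Longrightarrow> eqp R (p @ u @ s) (p @ v @ s)"
proof (induction rule: eqp.induct)
  case (refl w) thus ?case by (rule eqp.refl)
next
  case (sym w v) thus ?case by (metis eqp.sym)
next
  case (trans u v w) thus ?case by (metis eqp.trans)
next
  case (cancel u x v)
  have "eqp R ((p @ u) @ [x, flip x] @ (v @ s)) ((p @ u) @ (v @ s))" by (rule eqp.cancel)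
  thus ?case by simp
next
  case (rel r u v)
  have "eqp R ((p @ u) @ r @ (v @ s)) ((p @ u) @ (v @ s))" using rel by (rule eqp.rel)
  thus ?case by simp
qed

lemma eqp_L: "eqp R u v \<Longrightarrow> eqp R (p @ u) (p @ v)" using eqp_cong[of R u v p "[]"] by simp
lemma eqp_R: "eqp R u v \<Longrightarrow> eqp R (u @ s) (v @ s)" using eqp_cong[of R u v "[]" s] by simp
lemma eqp_app: "eqp R u u' \<Longrightarrow> eqp R v v' \<Longrightarrow> eqp R (u @ v) (u' @ v')"
  by (metis eqp_L eqp_R eqp.trans)
lemma eqp_tr: "eqp R u v \<Longrightarrow> eqp R v w \<Longrightarrow> eqp R u w" by (rule eqp.trans)
lemmas [trans] = eqp_tr
lemma eqp_sy: "eqp R u v \<Longrightarrow> eqp R v u" by (rule eqp.sym)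
lemma eqp_rf: "eqp R u u" by (rule eqp.refl)

lemma inv_cancel1: "eqp R (winv w @ w) []"
proof (induction w)
  case Nil thus ?case by (simp add: eqp_rf)
next
  case (Cons x w)
  have "eqp R (winv w @ [flip x, flip (flip x)] @ w) (winv w @ w)" by (rule eqp.cancel)
  then show ?case using Cons by (simp, metis eqp_tr)
qed

lemma inv_cancel2: "eqp R (w @ winv w) []"
  using inv_cancel1[of R "winv w"] by simp

lemma cancel_L: "eqp R (winv w @ w @ X) X" using eqp_R[OF inv_cancel1[of R w], of X] by simp
lemma cancel_L2: "eqp R (w @ winv w @ X) X" using eqp_R[OF inv_cancel2[of R w], of X] by simp

definition ipow :: "word \<Rightarrow> int \<Rightarrow> word" where
  "ipow w k = (if 0 \<le> k then concat (replicate (nat k) w) else concat (replicate (nat (-k)) (winv w)))"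

lemma ipow_0[simp]: "ipow w 0 = []" by (simp add: ipow_def)
lemma ipow_1: "ipow w 1 = w" by (simp add: ipow_def)
lemma ipow_m1: "ipow w (-1) = winv w" by (simp add: ipow_def)

lemma ipow_lit1: "0 \<le> k \<Longrightarrow> ipow w (k + 1) = w @ ipow w k"
  by (simp add: ipow_def nat_add_distrib)
lemma ipow_lit2: "k < 0 \<Longrightarrow> ipow w k = winv w @ ipow w (k + 1)"
proof -
  assume k: "k < 0"
  have "nat (-k) = Suc (nat (- (k+1)))" using k by simp
  then show ?thesis using k by (auto simp: ipow_def)
qed

lemma ipow_S: "eqp R (ipow w (k + 1)) (w @ ipow w k)"
proof (cases "0 \<le> k")
  case True thus ?thesis by (simp add: ipow_lit1 eqp_rf)
next
  case False
  then have "w @ ipow w k = w @ winv w @ ipow w (k + 1)" by (simp add: ipow_lit2)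
  thus ?thesis using cancel_L2[of R w "ipow w (k+1)"] by (simp add: eqp_sy)
qed

lemma ipow_P: "eqp R (ipow w (k - 1)) (winv w @ ipow w k)"
proof (cases "k \<le> 0")
  case True
  then have "ipow w (k - 1) = winv w @ ipow w k" using ipow_lit2[of "k - 1" w] by simp
  thus ?thesis by (simp add: eqp_rf)
next
  case False
  then have "ipow w k = w @ ipow w (k - 1)" using ipow_lit1[of "k - 1" w] by simp
  thus ?thesis using cancel_L[of R w "ipow w (k - 1)"] by (simp add: eqp_sy)
qed

lemma ipow_add: "eqp R (ipow w k @ ipow w l) (ipow w (k + l))"
proof (induction k rule: int_induct[where k = 0])
  case base thus ?case by (simp add: eqp_rf)
next
  case (step1 i)
  have "eqp R (ipow w (i + 1) @ ipow w l) (w @ ipow w i @ ipow w l)"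
    using eqp_R[OF ipow_S[of R w i]] by simp
  also have "eqp R \<dots> (w @ ipow w (i + l))" using eqp_L[OF step1(2)] .
  also have "eqp R \<dots> (ipow w (i + l + 1))" using eqp_sy[OF ipow_S] .
  finally show ?case by (simp add: ac_simps)
next
  case (step2 i)
  have "eqp R (ipow w (i - 1) @ ipow w l) (winv w @ ipow w i @ ipow w l)"
    using eqp_R[OF ipow_P[of R w i]] by simp
  also have "eqp R \<dots> (winv w @ ipow w (i + l))" using eqp_L[OF step2(2)] .
  also have "eqp R \<dots> (ipow w (i + l - 1))" using eqp_sy[OF ipow_P] .
  finally show ?case by (metis diff_add_eq)
qed

lemma comm_inv: assumes "eqp R (u @ v) (v @ u)" shows "eqp R (winv u @ v) (v @ winv u)"
proof -
  have "eqp R (winv u @ v) (winv u @ (v @ u) @ winv u)"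
    using eqp_sy[OF cancel_L2[of R u "[]"]] eqp_L[of R "u @ winv u" "[]" "winv u @ v"]
    by (metis append.assoc append_Nil2 eqp_sy cancel_L2 eqp_L)
  also have "eqp R \<dots> (winv u @ (u @ v) @ winv u)" using eqp_cong[OF eqp_sy[OF assms]] by simp
  also have "eqp R \<dots> (v @ winv u)" using cancel_L[of R u "v @ winv u"] by simp
  finally show ?thesis .
qed

lemma comm_pow1: assumes c: "eqp R (u @ v) (v @ u)" shows "eqp R (ipow u k @ v) (v @ ipow u k)"
proof (induction k rule: int_induct[where k = 0])
  case base thus ?case by (simp add: eqp_rf)
next
  case (step1 i)
  have "eqp R (ipow u (i + 1) @ v) (u @ ipow u i @ v)" using eqp_R[OF ipow_S[of R u i]] by simp
  also have "eqp R \<dots> (u @ v @ ipow u i)" using eqp_L[OF step1(2)] .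
  also have "eqp R \<dots> (v @ u @ ipow u i)" using eqp_R[OF c, of "ipow u i"] by simp
  also have "eqp R \<dots> (v @ ipow u (i + 1))" using eqp_L[OF eqp_sy[OF ipow_S[of R u i]]] .
  finally show ?case .
next
  case (step2 i)
  have c': "eqp R (winv u @ v) (v @ winv u)" using comm_inv[OF c] .
  have "eqp R (ipow u (i - 1) @ v) (winv u @ ipow u i @ v)" using eqp_R[OF ipow_P[of R u i]] by simp
  also have "eqp R \<dots> (winv u @ v @ ipow u i)" using eqp_L[OF step2(2)] .
  also have "eqp R \<dots> (v @ winv u @ ipow u i)" using eqp_R[OF c', of "ipow u i"] by simp
  also have "eqp R \<dots> (v @ ipow u (i - 1))" using eqp_L[OF eqp_sy[OF ipow_P[of R u i]]] .
  finally show ?case .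
qed

lemma comm_pow: assumes c: "eqp R (u @ v) (v @ u)" shows "eqp R (ipow u k @ ipow v l) (ipow v l @ ipow u k)"
proof -
  have "eqp R (ipow v l @ u) (u @ ipow v l)" using comm_pow1[OF eqp_sy[OF c]] .
  then show ?thesis using comm_pow1[OF eqp_sy] by blast
qed

lemma comm_powX: assumes c: "eqp R (u @ v) (v @ u)" shows "eqp R (ipow u k @ ipow v l @ X) (ipow v l @ ipow u k @ X)"
  using eqp_R[OF comm_pow[OF c, of k l], of X] by simp

lemma ipow_addX: "eqp R (ipow w k @ ipow w l @ X) (ipow w (k + l) @ X)"
  using eqp_R[OF ipow_add[of R w k l], of X] by simp

fun wsyl :: "nat \<Rightarrow> nat \<Rightarrow> syl \<Rightarrow> word" where
  "wsyl m n (t,r,s) = (if t then ipow [gen_b] r @ ipow (d_word n) 0 @ ipow (c_word m) s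
                       else ipow [gen_a] r @ ipow (d_word n) s)"

fun word_of :: "nat \<Rightarrow> nat \<Rightarrow> nf \<Rightarrow> word" where
  "word_of m n ((p,q),ys) = ipow (c_word m) p @ ipow (d_word n) q @ concat (map (wsyl m n) ys)"

lemma concat_rep_rep: "concat (replicate k (replicate j x)) = replicate (k * j) x"
  by (induction k) (simp_all add: replicate_add)

lemma winv_rep: "winv (replicate j x) = replicate j (flip x)"
  by (simp add: winv_def)

lemma pow_rep: "ipow [x] (int j * Q) = ipow (replicate j x) Q"
proof (cases "0 \<le> Q")
  case True
  then have "nat (int j * Q) = nat Q * j" by (simp add: nat_mult_distrib)
  thus ?thesis using True by (auto simp: ipow_def concat_rep_rep zero_le_mult_iff)
next
  case False
  show ?thesis
  proof (cases "j = 0")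
    case True thus ?thesis by (simp add: ipow_def)
  next
    case j: False
    have "- (int j * Q) = int j * (- Q)" by simp
    then have "nat (- (int j * Q)) = nat (int j * (-Q))" by simp
    also have "\<dots> = j * nat (-Q)" using nat_mult_distrib[of "int j" "-Q"] by simp
    finally have "nat (- (int j * Q)) = nat (-Q) * j" by simp
    moreover have "\<not> 0 \<le> int j * Q" using False j by (simp add: zero_le_mult_iff)
    ultimately show ?thesis using False by (simp add: ipow_def winv_rep concat_rep_rep)
  qed
qed

lemma gw_app: "u \<in> gen_words S \<Longrightarrow> v \<in> gen_words S \<Longrightarrow> u @ v \<in> gen_words S"
  by (induction rule: gen_words.induct) (auto intro: gen_words.intros)

lemma gw_rep: "s \<in> S \<Longrightarrow> concat (replicate k s) \<in> gen_words S"
  by (induction k) (auto intro: gen_words.intros)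
lemma gw_repi: "s \<in> S \<Longrightarrow> concat (replicate k (winv s)) \<in> gen_words S"
  by (induction k) (auto intro: gen_words.intros)
lemma gw_ipow: "s \<in> S \<Longrightarrow> ipow s k \<in> gen_words S"
  by (simp add: ipow_def gw_rep gw_repi)

locale grp =
  fixes m n :: nat
  assumes m1: "m > 1" and n1: "n > 1"
begin

lemma mpos: "(0::int) < int m" using m1 by simp
lemma npos: "(0::int) < int n" using n1 by simp

lemma mA_valid: assumes v: "valid T m n ((p,q),ys)" shows "valid T m n (mA T m e ((p,q),ys))"
proof (cases ys)
  case Nil thus ?thesis using v mpos by (auto simp: md_def mod_pos_ne)
next
  case (Cons y rest) obtain t r s where y: "y = (t,r,s)" by (cases y)
  show ?thesis using v mpos unfolding Cons y by (auto simp: md_def mod_pos_ne split: list.splits)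
qed

lemma mB_valid: assumes v: "valid T m n ((p,q),ys)" shows "valid T m n (mB T n e ((p,q),ys))"
proof (cases ys)
  case Nil thus ?thesis using v npos by (auto simp: md_def mod_pos_ne)
next
  case (Cons y rest) obtain t r s where y: "y = (t,r,s)" by (cases y)
  show ?thesis using v npos unfolding Cons y by (auto simp: md_def mod_pos_ne split: list.splits)
qed

lemma mA_add: assumes v: "valid T m n ((p,q),ys)"
  shows "mA T m e1 (mA T m e2 ((p,q),ys)) = mA T m (e1 + e2) ((p,q),ys)"
proof -
  let ?M = "int m"
  have f1: "(e1 + e2) div ?M = (e1 + e2 mod ?M) div ?M + e2 div ?M" "(e1 + e2) mod ?M = (e1 + e2 mod ?M) mod ?M"
    using divmod_add[OF mpos, of e1 e2] by auto
  show ?thesis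
  proof (cases ys)
    case Nil
    show ?thesis unfolding Nil using f1 mpos
      by (auto simp: ac_simps mod_pos_ne)
  next
    case (Cons y rest) obtain t r s where y: "y = (t,r,s)" by (cases y)
    have f2: "(e1 + (e2 + r)) div ?M = (e1 + (e2 + r) mod ?M) div ?M + (e2 + r) div ?M" "(e1 + (e2 + r)) mod ?M = (e1 + (e2 + r) mod ?M) mod ?M"
      using divmod_add[OF mpos, of e1 "e2 + r"] by auto
    show ?thesis using v f1 f2 mpos unfolding Cons y
      by (auto simp: ac_simps mod_pos_ne split: list.splits)
  qed
qed

lemma mA_mult: assumes v: "valid T m n ((p,q),ys)"
  shows "mA T m (int m * k) ((p,q),ys) = tr T (k,0) ((p,q),ys)"
proof (cases ys)
  case Nil thus ?thesis using v mpos by (simp add: md_def)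
next
  case (Cons y rest) obtain t r s where y: "y = (t,r,s)" by (cases y)
  have "(int m * k + r) div int m = k" "(int m * k + r) mod int m = r" if "0 < r" "r < int m" 
    using that mpos by (simp_all add: add.commute)
  moreover have "\<not> int m dvd r" if "0 < r" "r < int m" using that zdvd_not_zless by blast
  ultimately show ?thesis using v mpos unfolding Cons y by (cases t; auto simp: md_def)
qed

lemma mB_mult: assumes v: "valid T m n ((p,q),ys)"
  shows "mB T n (int n * k) ((p,q),ys) = tr T (0,k) ((p,q),ys)"
proof (cases ys)
  case Nil thus ?thesis using v npos by (simp add: md_def)
next
  case (Cons y rest) obtain t r s where y: "y = (t,r,s)" by (cases y)
  have "(int n * k + r) div int n = k" "(int n * k + r) mod int n = r" if "0 < r" "r < int n" 
    using that npos by (simp_all add: add.commute)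
  moreover have "\<not> int n dvd r" if "0 < r" "r < int n" using that zdvd_not_zless by blast
  ultimately show ?thesis using v npos unfolding Cons y by (cases t; auto simp: md_def)
qed

lemma mB_add: assumes v: "valid T m n ((p,q),ys)"
  shows "mB T n e1 (mB T n e2 ((p,q),ys)) = mB T n (e1 + e2) ((p,q),ys)"
proof -
  let ?M = "int n"
  have f1: "(e1 + e2) div ?M = (e1 + e2 mod ?M) div ?M + e2 div ?M" "(e1 + e2) mod ?M = (e1 + e2 mod ?M) mod ?M"
    using divmod_add[OF npos, of e1 e2] by auto
  show ?thesis
  proof (cases ys)
    case Nil
    show ?thesis unfolding Nil using f1 npos
      by (auto simp: ac_simps mod_pos_ne)
  next
    case (Cons y rest) obtain t r s where y: "y = (t,r,s)" by (cases y)
    have f2: "(e1 + (e2 + r)) div ?M = (e1 + (e2 + r) mod ?M) div ?M + (e2 + r) div ?M" "(e1 + (e2 + r)) mod ?M = (e1 + (e2 + r) mod ?M) mod ?M"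
      using divmod_add[OF npos, of e1 "e2 + r"] by auto
    show ?thesis using v f1 f2 npos unfolding Cons y
      by (cases t; cases "p = 0"; auto simp: ac_simps mod_pos_ne split: list.splits)
  qed
qed

lemma valid_mA: "valid T m n nf \<Longrightarrow> valid T m n (mA T m e nf)"
  by (cases nf rule: nf_ex) (simp add: mA_valid)
lemma valid_mB: "valid T m n nf \<Longrightarrow> valid T m n (mB T n e nf)"
  by (cases nf rule: nf_ex) (simp add: mB_valid)
lemma valid_tr: "valid T m n nf \<Longrightarrow> valid T m n (tr T v nf)"
  by (cases nf rule: nf_ex; cases v) simp
lemma tr_tr: "tr T v (tr T w nf) = tr T (fst v + fst w, snd v + snd w) nf"
  by (cases nf rule: nf_ex; cases v; cases w) (simp add: ac_simps)
lemma tr_0: "valid T m n nf \<Longrightarrow> tr T (0,0) nf = nf"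
  by (cases nf rule: nf_ex) simp
lemma addA: "valid T m n nf \<Longrightarrow> mA T m e1 (mA T m e2 nf) = mA T m (e1 + e2) nf"
  by (cases nf rule: nf_ex) (simp add: mA_add)
lemma addB: "valid T m n nf \<Longrightarrow> mB T n e1 (mB T n e2 nf) = mB T n (e1 + e2) nf"
  by (cases nf rule: nf_ex) (simp add: mB_add)
lemma multA: "valid T m n nf \<Longrightarrow> mA T m (int m * k) nf = tr T (k,0) nf"
  by (cases nf rule: nf_ex) (simp add: mA_mult)
lemma multB: "valid T m n nf \<Longrightarrow> mB T n (int n * k) nf = tr T (0,k) nf"
  by (cases nf rule: nf_ex) (simp add: mB_mult)
lemma zeroA: "valid T m n nf \<Longrightarrow> mA T m 0 nf = nf"
  using multA[of T nf 0] tr_0 by simp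
lemma zeroB: "valid T m n nf \<Longrightarrow> mB T n 0 nf = nf"
  using multB[of T nf 0] tr_0 by simp

lemma valid_act1: "valid T m n nf \<Longrightarrow> valid T m n (act1 T m n x nf)"
  by (simp add: act1_def valid_mA valid_mB)
lemma valid_act: "valid T m n nf \<Longrightarrow> valid T m n (act T m n w nf)"
  by (induction w) (simp_all add: valid_act1)

lemma act1_cancel: "valid T m n nf \<Longrightarrow> act1 T m n x (act1 T m n (flip x) nf) = nf"
  by (cases x) (auto simp: act1_def flip_def sg_def addA addB zeroA zeroB)

lemma act_repA: "valid T m n nf \<Longrightarrow> act T m n (replicate k gen_a) nf = mA T m (int k) nf"
  by (induction k) (auto simp: zeroA act1_def gen_a_def sg_def addA valid_act)
lemma act_repAi: "valid T m n nf \<Longrightarrow> act T m n (replicate k (False,True)) nf = mA T m (- int k) nf"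
  by (induction k) (auto simp: zeroA act1_def sg_def addA valid_act)
lemma act_repB: "valid T m n nf \<Longrightarrow> act T m n (replicate k gen_b) nf = mB T n (int k) nf"
  by (induction k) (auto simp: zeroB act1_def gen_b_def sg_def addB valid_act)
lemma act_repBi: "valid T m n nf \<Longrightarrow> act T m n (replicate k (True,True)) nf = mB T n (- int k) nf"
  by (induction k) (auto simp: zeroB act1_def sg_def addB valid_act)

lemma winv_c: "winv (c_word m) = replicate m (False,True)"
  by (simp add: winv_def c_word_def gen_a_def flip_def)
lemma winv_d: "winv (d_word n) = replicate n (True,True)"
  by (simp add: winv_def d_word_def gen_b_def flip_def)

lemma act_c: "valid T m n nf \<Longrightarrow> act T m n (c_word m) nf = tr T (1,0) nf"
  using act_repA multA[of T nf 1] by (simp add: c_word_def)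
lemma act_d: "valid T m n nf \<Longrightarrow> act T m n (d_word n) nf = tr T (0,1) nf"
  using act_repB multB[of T nf 1] by (simp add: d_word_def)
lemma act_ci: "valid T m n nf \<Longrightarrow> act T m n (winv (c_word m)) nf = tr T (-1,0) nf"
  using act_repAi multA[of T nf "-1"] by (simp add: winv_c)
lemma act_di: "valid T m n nf \<Longrightarrow> act T m n (winv (d_word n)) nf = tr T (0,-1) nf"
  using act_repBi multB[of T nf "-1"] by (simp add: winv_d)

lemma act_comm: "valid T m n nf \<Longrightarrow> act T m n (commutator (c_word m) (d_word n)) nf = nf"
  by (simp add: commutator_def act_c act_d act_ci act_di valid_tr tr_tr tr_0)

lemma act_powA: "valid T m n nf \<Longrightarrow> act T m n (replicate (m * T) gen_a) nf = nf"
proof -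
  assume v: "valid T m n nf"
  have "act T m n (replicate (m * T) gen_a) nf = tr T (int T, 0) nf"
    using act_repA[OF v] multA[OF v, of "int T"] by simp
  also have "\<dots> = nf" using v by (cases nf rule: nf_ex) (simp add: md_def)
  finally show ?thesis .
qed
lemma act_powB: "valid T m n nf \<Longrightarrow> act T m n (replicate (n * T) gen_b) nf = nf"
proof -
  assume v: "valid T m n nf"
  have "act T m n (replicate (n * T) gen_b) nf = tr T (0, int T) nf"
    using act_repB[OF v] multB[OF v, of "int T"] by simp
  also have "\<dots> = nf" using v by (cases nf rule: nf_ex) (simp add: md_def)
  finally show ?thesis .
qed

lemma act_inv: "eqp (rels_Gt m n T) u v \<Longrightarrow> valid T m n nf \<Longrightarrow> act T m n u nf = act T m n v nf"
proof (induction arbitrary: nf rule: eqp.induct)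
  case (cancel u x v)
  then show ?case using act1_cancel valid_act by simp
next
  case (rel r u v)
  have vv: "valid T m n (act T m n v nf)" using rel valid_act by blast
  have "act T m n r (act T m n v nf) = act T m n v nf"
    using rel(1) act_comm[OF vv] act_powA[OF vv] act_powB[OF vv] unfolding rels_Gt_def by blast
  then show ?case by simp
qed auto

lemma rml_ex: obtains ys' i j where "rml T ys v = (ys', (i,j))" by (metis prod.exhaust)

lemma mA_rmul: assumes v: "valid T m n ((p,q),ys)"
  shows "mA T m e (rmul T ((p,q),ys) w) = rmul T (mA T m e ((p,q),ys)) w"
proof (cases ys)
  case Nil thus ?thesis by (cases w) (auto simp: ac_simps)
next
  case (Cons y rest) obtain t r s where y: "y = (t,r,s)" by (cases y)
  obtain rest' i j where R: "rml T rest w = (rest', (i,j))" by (rule rml_ex)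
  show ?thesis using v R unfolding Cons y by (cases t; auto simp: ac_simps)
qed

lemma mB_rmul: assumes v: "valid T m n ((p,q),ys)"
  shows "mB T n e (rmul T ((p,q),ys) w) = rmul T (mB T n e ((p,q),ys)) w"
proof (cases ys)
  case Nil thus ?thesis by (cases w) (auto simp: ac_simps)
next
  case (Cons y rest) obtain t r s where y: "y = (t,r,s)" by (cases y)
  obtain rest' i j where R: "rml T rest w = (rest', (i,j))" by (rule rml_ex)
  show ?thesis using v R unfolding Cons y by (cases t; auto simp: ac_simps)
qed

lemma act_rmul: "valid T m n nf \<Longrightarrow> act T m n u (rmul T nf w) = rmul T (act T m n u nf) w"
proof (induction u)
  case (Cons x u)
  have vv: "valid T m n (act T m n u nf)" using Cons valid_act by blast
  then obtain p q ys where e: "act T m n u nf = ((p,q),ys)" by (metis nf_ex)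
  show ?case using Cons vv mA_rmul mB_rmul unfolding act_Cons e act1_def by (simp add: e)
qed simp

lemma rml_props: "vs T m n ys \<Longrightarrow> vs T m n (fst (rml T ys v)) \<and> map fst (fst (rml T ys v)) = map fst ys \<and>
   (ys \<noteq> [] \<and> \<not> fst (hd ys) \<longrightarrow> snd (snd (rml T ys v)) = 0) \<and>
   (ys \<noteq> [] \<and> fst (hd ys) \<longrightarrow> fst (snd (rml T ys v)) = 0)"
proof (induction ys)
  case (Cons y ys)
  obtain t r s where y: "y = (t,r,s)" by (cases y)
  obtain ys' i j where R: "rml T ys v = (ys', (i,j))" by (rule rml_ex)
  show ?case using Cons R unfolding y
    by (cases ys; cases ys'; auto split: if_splits)
qed simp

lemma valid_rmul: "valid T m n nf \<Longrightarrow> valid T m n (rmul T nf v)"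
proof -
  assume v: "valid T m n nf"
  obtain p q ys where e: "nf = ((p,q),ys)" by (rule nf_ex)
  obtain ys' i j where R: "rml T ys v = (ys', (i,j))" by (rule rml_ex)
  show ?thesis using v rml_props[of T ys v] R unfolding e by auto
qed

lemma rml_carry: "((\<exists>y\<in>set ys. \<not> fst y) \<longrightarrow> snd (snd (rml T ys v)) = 0) \<and>
   ((\<exists>y\<in>set ys. fst y) \<longrightarrow> fst (snd (rml T ys v)) = 0)"
proof (induction ys)
  case (Cons y ys)
  obtain t r s where y: "y = (t,r,s)" by (cases y)
  obtain ys' i j where R: "rml T ys v = (ys', (i,j))" by (rule rml_ex)
  show ?case using Cons R unfolding y by auto
qed simp

lemma mA_md: assumes "\<bar>q\<bar> < int T"
  shows "mA T m e (md_nf T ((p,q),ys)) = md_nf T (mA 0 m e ((p,q),ys))"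
proof (cases ys)
  case Nil thus ?thesis by (auto simp: ac_simps)
next
  case (Cons y rest) obtain t r s where y: "y = (t,r,s)" by (cases y)
  show ?thesis using md_small[OF assms] unfolding Cons y by (cases t; auto simp: ac_simps)
qed

lemma mB_md: assumes "\<bar>p\<bar> < int T"
  shows "mB T n e (md_nf T ((p,q),ys)) = md_nf T (mB 0 n e ((p,q),ys))"
proof (cases ys)
  case Nil thus ?thesis by (auto simp: ac_simps)
next
  case (Cons y rest) obtain t r s where y: "y = (t,r,s)" by (cases y)
  show ?thesis using md_small[OF assms] unfolding Cons y by (cases t; auto simp: ac_simps)
qed

lemma act_md: "(\<forall>k. zb (act 0 m n (drop k w) nf0) < int T) \<Longrightarrow>
   act T m n w (md_nf T nf0) = md_nf T (act 0 m n w nf0)"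
proof (induction w)
  case Nil thus ?case by simp
next
  case (Cons x w)
  have h: "\<forall>k. zb (act 0 m n (drop k w) nf0) < int T"
  proof
    fix k show "zb (act 0 m n (drop k w) nf0) < int T" using Cons.prems[rule_format, of "Suc k"] by simp
  qed
  obtain p q ys where e: "act 0 m n w nf0 = ((p,q),ys)" by (rule nf_ex)
  have z: "\<bar>p\<bar> < int T" "\<bar>q\<bar> < int T" using h[rule_format, of 0] e by auto
  show ?case using Cons.IH[OF h] mA_md[OF z(2)] mB_md[OF z(1)] e by (simp add: act1_def)
qed

lemma bound_ex: "\<exists>B. \<forall>k. zb (act 0 m n (drop k w) nf0) \<le> B"
proof (induction w)
  case Nil thus ?case by auto
next
  case (Cons x w)
  then obtain B where B: "\<forall>k. zb (act 0 m n (drop k w) nf0) \<le> B" by blast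
  show ?case
  proof (intro exI allI)
    fix k show "zb (act 0 m n (drop k (x # w)) nf0) \<le> max B (zb (act 0 m n (x # w) nf0))"
      using B by (cases k) (simp_all add: le_max_iff_disj)
  qed
qed

abbreviation E where "E \<equiv> eqp (rels_G m n)"
abbreviation cw where "cw \<equiv> c_word m"
abbreviation dw where "dw \<equiv> d_word n"
abbreviation a1 where "a1 \<equiv> [gen_a]"
abbreviation b1 where "b1 \<equiv> [gen_b]"

lemma cd_comm: "E (cw @ dw) (dw @ cw)"
proof -
  have r: "commutator cw dw \<in> rels_G m n" by (simp add: rels_G_def)
  have "E ((dw @ cw) @ commutator cw dw @ []) ((dw @ cw) @ [])" using r by (rule eqp.rel)
  then have 1: "E (dw @ cw @ winv cw @ winv dw @ cw @ dw) (dw @ cw)" by (simp add: commutator_def)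
  have "E (dw @ cw @ winv cw @ winv dw @ cw @ dw) (dw @ winv dw @ cw @ dw)"
    using eqp_L[OF cancel_L2[of "rels_G m n" cw "winv dw @ cw @ dw"], of dw] .
  also have "E \<dots> (cw @ dw)" by (rule cancel_L2)
  finally show ?thesis using 1 by (metis eqp_sy eqp_tr)
qed

lemma ac_comm: "E (a1 @ cw) (cw @ a1)"
  by (simp add: c_word_def replicate_append_same eqp_rf)
lemma bd_comm: "E (b1 @ dw) (dw @ b1)"
  by (simp add: d_word_def replicate_append_same eqp_rf)

lemma powA: "ipow a1 (int m * Q) = ipow cw Q" by (simp add: pow_rep c_word_def)
lemma powB: "ipow b1 (int n * Q) = ipow dw Q" by (simp add: pow_rep d_word_def)

lemma H1a: "E (ipow a1 e @ ipow cw p @ X) (ipow cw (p + e div int m) @ ipow a1 (e mod int m) @ X)"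
proof -
  have e: "e = e mod int m + int m * (e div int m)" by simp
  have "E (ipow a1 e @ ipow cw p @ X) (ipow a1 (e mod int m) @ ipow a1 (int m * (e div int m)) @ ipow cw p @ X)"
    using eqp_sy[OF ipow_addX[of "rels_G m n" a1 "e mod int m" "int m * (e div int m)" "ipow cw p @ X"]] e by simp
  also have "E \<dots> (ipow a1 (e mod int m) @ ipow cw (e div int m + p) @ X)"
    unfolding powA by (rule eqp_L[OF ipow_addX])
  also have "E \<dots> (ipow cw (e div int m + p) @ ipow a1 (e mod int m) @ X)" by (rule comm_powX[OF ac_comm])
  finally show ?thesis by (simp add: add.commute)
qed

lemma H1b: "E (ipow b1 e @ ipow dw q @ X) (ipow dw (q + e div int n) @ ipow b1 (e mod int n) @ X)"
proof -
  have e: "e = e mod int n + int n * (e div int n)" by simp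
  have "E (ipow b1 e @ ipow dw q @ X) (ipow b1 (e mod int n) @ ipow b1 (int n * (e div int n)) @ ipow dw q @ X)"
    using eqp_sy[OF ipow_addX[of "rels_G m n" b1 "e mod int n" "int n * (e div int n)" "ipow dw q @ X"]] e by simp
  also have "E \<dots> (ipow b1 (e mod int n) @ ipow dw (e div int n + q) @ X)"
    unfolding powB by (rule eqp_L[OF ipow_addX])
  also have "E \<dots> (ipow dw (e div int n + q) @ ipow b1 (e mod int n) @ X)" by (rule comm_powX[OF bd_comm])
  finally show ?thesis by (simp add: add.commute)
qed

lemma finA: "E (ipow cw P @ ipow a1 R @ ipow dw s @ concat (map (wsyl m n) rest))
   (word_of m n (if R = 0 then ((P, s), rest) else ((P, 0), (False, R, s) # rest)))"
  by (simp add: eqp_rf)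

lemma finB: "E (ipow dw Q @ ipow b1 R @ ipow cw P @ concat (map (wsyl m n) rest))
   (word_of m n (if R = 0 then ((P, Q), rest) else ((0, Q), (True, R, P) # rest)))"
proof (cases "R = 0")
  case True
  have "E (ipow dw Q @ ipow cw P @ concat (map (wsyl m n) rest)) (ipow cw P @ ipow dw Q @ concat (map (wsyl m n) rest))"
    by (rule comm_powX[OF eqp_sy[OF cd_comm]])
  thus ?thesis using True by simp
qed (simp add: eqp_rf)

lemma sA: "E (ipow a1 e @ word_of m n ((p,q),ys)) (word_of m n (mA 0 m e ((p,q),ys)))"
proof -
  have br1: "E (ipow a1 e @ word_of m n ((p,q),ys))
     (word_of m n (if e mod int m = 0 then ((p + e div int m, q), ys) else ((p + e div int m, 0), (False, e mod int m, q) # ys)))"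
    using eqp_tr[OF H1a finA] by simp
  show ?thesis
  proof (cases ys)
    case Nil thus ?thesis using br1 unfolding Nil by (cases "e mod int m = 0") simp_all
  next
    case (Cons y rest) obtain t r s where y: "y = (t,r,s)" by (cases y)
    show ?thesis
    proof (cases "q \<noteq> 0 \<or> t")
      case True thus ?thesis using br1 unfolding Cons y by (simp split: if_splits)
    next
      case False
      let ?W = "concat (map (wsyl m n) rest)"
      have "E (ipow a1 e @ ipow cw p @ ipow a1 r @ ipow dw s @ ?W) (ipow a1 e @ ipow a1 r @ ipow cw p @ ipow dw s @ ?W)"
        by (rule eqp_L[OF comm_powX[OF eqp_sy[OF ac_comm]]])
      also have "E \<dots> (ipow a1 (e + r) @ ipow cw p @ ipow dw s @ ?W)" by (rule ipow_addX)
      also have "E \<dots> (ipow cw (p + (e + r) div int m) @ ipow a1 ((e + r) mod int m) @ ipow dw s @ ?W)" by (rule H1a)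
      also have "E \<dots> (word_of m n (if (e + r) mod int m = 0 then ((p + (e + r) div int m, s), rest)
          else ((p + (e + r) div int m, 0), (False, (e + r) mod int m, s) # rest)))" by (rule finA)
      finally show ?thesis using False unfolding Cons y by (cases "(e + r) mod int m = 0") simp_all
    qed
  qed
qed

lemma sB: "E (ipow b1 e @ word_of m n ((p,q),ys)) (word_of m n (mB 0 n e ((p,q),ys)))"
proof -
  have br1: "E (ipow b1 e @ word_of m n ((p,q),ys))
     (word_of m n (if e mod int n = 0 then ((p, q + e div int n), ys) else ((0, q + e div int n), (True, e mod int n, p) # ys)))"
  proof -
    let ?W = "concat (map (wsyl m n) ys)"
    have "E (ipow b1 e @ ipow cw p @ ipow dw q @ ?W) (ipow b1 e @ ipow dw q @ ipow cw p @ ?W)"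
      by (rule eqp_L[OF comm_powX[OF cd_comm]])
    also have "E \<dots> (ipow dw (q + e div int n) @ ipow b1 (e mod int n) @ ipow cw p @ ?W)" by (rule H1b)
    also have "E \<dots> (word_of m n (if e mod int n = 0 then ((p, q + e div int n), ys) else ((0, q + e div int n), (True, e mod int n, p) # ys)))" by (rule finB)
    finally show ?thesis by simp
  qed
  show ?thesis
  proof (cases ys)
    case Nil thus ?thesis using br1 unfolding Nil by (cases "e mod int n = 0") simp_all
  next
    case (Cons y rest) obtain t r s where y: "y = (t,r,s)" by (cases y)
    show ?thesis
    proof (cases "p \<noteq> 0 \<or> \<not> t")
      case True thus ?thesis using br1 unfolding Cons y by (simp split: if_splits)
    next
      case False
      let ?W = "concat (map (wsyl m n) rest)"
      have "E (ipow b1 e @ ipow dw q @ ipow b1 r @ ipow cw s @ ?W) (ipow b1 e @ ipow b1 r @ ipow dw q @ ipow cw s @ ?W)"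
        by (rule eqp_L[OF comm_powX[OF eqp_sy[OF bd_comm]]])
      also have "E \<dots> (ipow b1 (e + r) @ ipow dw q @ ipow cw s @ ?W)" by (rule ipow_addX)
      also have "E \<dots> (ipow dw (q + (e + r) div int n) @ ipow b1 ((e + r) mod int n) @ ipow cw s @ ?W)" by (rule H1b)
      also have "E \<dots> (word_of m n (if (e + r) mod int n = 0 then ((s, q + (e + r) div int n), rest)
          else ((0, q + (e + r) div int n), (True, (e + r) mod int n, s) # rest)))" by (rule finB)
      finally show ?thesis using False unfolding Cons y by (cases "(e + r) mod int n = 0") simp_all
    qed
  qed
qed

lemma sound1: "E (x # word_of m n nf) (word_of m n (act1 0 m n x nf))"
proof -
  obtain p q ys where e: "nf = ((p,q),ys)" by (rule nf_ex)
  obtain g sgn where x: "x = (g, sgn)" by (cases x)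
  have L: "x # word_of m n nf = ipow (if g then b1 else a1) (sg x) @ word_of m n nf"
    by (cases g; cases sgn) (auto simp: x sg_def ipow_def gen_a_def gen_b_def flip_def)
  have K: "E (ipow (if g then b1 else a1) (sg x) @ word_of m n nf) (word_of m n (act1 0 m n x nf))"
  proof (cases g)
    case True thus ?thesis using sB[of "sg x" p q ys] by (simp add: e act1_def x)
  next
    case False thus ?thesis using sA[of "sg x" p q ys] by (simp add: e act1_def x)
  qed
  show ?thesis unfolding L by (rule K)
qed

lemma sound: "E w (word_of m n (act 0 m n w ((0,0),[])))"
proof (induction w)
  case Nil thus ?case by (simp add: eqp_rf)
next
  case (Cons x w)
  have "E (x # w) (x # word_of m n (act 0 m n w ((0,0),[])))" using eqp_L[OF Cons.IH, of "[x]"] by simp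
  also have "E \<dots> (word_of m n (act 0 m n (x # w) ((0,0),[])))" using sound1 by simp
  finally show ?case .
qed

lemma word_of_A: "\<forall>y\<in>set ys. \<not> fst y \<Longrightarrow> word_of m n ((p,q),ys) \<in> gen_words {a1, cw, dw}"
proof -
  assume h: "\<forall>y\<in>set ys. \<not> fst y"
  have "concat (map (wsyl m n) ys) \<in> gen_words {a1, cw, dw}" using h
  proof (induction ys)
    case Nil thus ?case by (simp add: gen_words.nil)
  next
    case (Cons y ys) obtain t r s where y: "y = (t,r,s)" by (cases y)
    thus ?case using Cons by (auto intro!: gw_app gw_ipow)
  qed
  thus ?thesis by (auto intro!: gw_app gw_ipow)
qed

lemma word_of_B: "\<forall>y\<in>set ys. fst y \<Longrightarrow> word_of m n ((p,q),ys) \<in> gen_words {b1, cw, dw}"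
proof -
  assume h: "\<forall>y\<in>set ys. fst y"
  have "concat (map (wsyl m n) ys) \<in> gen_words {b1, cw, dw}" using h
  proof (induction ys)
    case Nil thus ?case by (simp add: gen_words.nil)
  next
    case (Cons y ys) obtain t r s where y: "y = (t,r,s)" by (cases y)
    thus ?case using Cons by (auto intro!: gw_app gw_ipow)
  qed
  thus ?thesis by (auto intro!: gw_app gw_ipow)
qed

lemma elength_le1: assumes "inA m n f \<or> inB m n f" shows "elength m n f \<le> 1"
proof -
  have "reduced_form m n f [f]" using assms by (simp add: reduced_form_def eqp_rf)
  then have "\<exists>xs. length xs = 1 \<and> reduced_form m n f xs" by (intro exI[of _ "[f]"]) simp
  then show ?thesis unfolding elength_def by (rule Least_le)
qed

lemma elength_types: assumes "elength m n f > 1"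
  shows "(\<exists>y\<in>set (snd (act 0 m n f ((0,0),[]))). fst y) \<and> (\<exists>y\<in>set (snd (act 0 m n f ((0,0),[]))). \<not> fst y)"
proof -
  obtain p q ys where e: "act 0 m n f ((0,0),[]) = ((p,q),ys)" by (rule nf_ex)
  have s: "E f (word_of m n ((p,q),ys))" using sound[of f] e by simp
  have "\<not> (\<forall>y\<in>set ys. \<not> fst y)"
  proof
    assume "\<forall>y\<in>set ys. \<not> fst y"
    then have "inA m n f" using word_of_A s unfolding inA_def in_sub_def by blast
    then show False using elength_le1 assms by fastforce
  qed
  moreover have "\<not> (\<forall>y\<in>set ys. fst y)"
  proof
    assume "\<forall>y\<in>set ys. fst y"
    then have "inB m n f" using word_of_B s unfolding inB_def in_sub_def by blast
    then show False using elength_le1 assms by fastforce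
  qed
  ultimately show ?thesis using e by auto
qed

declare valid.simps[simp del]

lemma act_winv: "valid T m n nf \<Longrightarrow> act T m n (winv w) (act T m n w nf) = nf"
proof (induction w arbitrary: nf)
  case (Cons x w)
  have v: "valid T m n (act T m n w nf)" using Cons.prems valid_act by blast
  have "act1 T m n (flip x) (act1 T m n x (act T m n w nf)) = act T m n w nf"
    using act1_cancel[OF v, of "flip x"] by simp
  then show ?case using Cons by simp
qed simp

lemma gw_tr: "x \<in> gen_words {cw, dw} \<Longrightarrow> \<exists>v. \<forall>nf. valid T m n nf \<longrightarrow> act T m n x nf = tr T v nf"
proof (induction rule: gen_words.induct)
  case nil thus ?case using tr_0 by (intro exI[of _ "(0,0)"]) simp
next
  case (gen s w)
  then obtain v where v: "\<forall>nf. valid T m n nf \<longrightarrow> act T m n w nf = tr T v nf" by blast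
  from gen(1) obtain u where u: "\<forall>nf. valid T m n nf \<longrightarrow> act T m n s nf = tr T u nf"
    using act_c act_d by blast
  show ?case
  proof (intro exI allI impI)
    fix nf assume vn: "valid T m n nf"
    have "act T m n (s @ w) nf = act T m n s (tr T v nf)" using v[rule_format, OF vn] by simp
    also have "\<dots> = tr T u (tr T v nf)" using u valid_tr[OF vn] by blast
    finally show "act T m n (s @ w) nf = tr T (fst u + fst v, snd u + snd v) nf" by (simp add: tr_tr)
  qed
next
  case (geninv s w)
  then obtain v where v: "\<forall>nf. valid T m n nf \<longrightarrow> act T m n w nf = tr T v nf" by blast
  from geninv(1) obtain u where u: "\<forall>nf. valid T m n nf \<longrightarrow> act T m n (winv s) nf = tr T u nf"
    using act_ci act_di by blast
  show ?case
  proof (intro exI allI impI)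
    fix nf assume vn: "valid T m n nf"
    have "act T m n (winv s @ w) nf = act T m n (winv s) (tr T v nf)" using v[rule_format, OF vn] by simp
    also have "\<dots> = tr T u (tr T v nf)" using u valid_tr[OF vn] by blast
    finally show "act T m n (winv s @ w) nf = tr T (fst u + fst v, snd u + snd v) nf" by (simp add: tr_tr)
  qed
qed

lemma act_rep_tr: assumes h: "\<forall>nf. valid T m n nf \<longrightarrow> act T m n w nf = tr T u nf"
  shows "valid T m n nf \<Longrightarrow> act T m n (concat (replicate k w)) nf = tr T (int k * fst u, int k * snd u) nf"
proof (induction k arbitrary: nf)
  case 0 thus ?case using tr_0 by simp
next
  case (Suc k)
  have "act T m n (concat (replicate (Suc k) w)) nf = act T m n w (act T m n (concat (replicate k w)) nf)" by simp
  also have "\<dots> = act T m n w (tr T (int k * fst u, int k * snd u) nf)" using Suc by simp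
  also have "\<dots> = tr T u (tr T (int k * fst u, int k * snd u) nf)"
    using h[rule_format, OF valid_tr[OF Suc.prems]] .
  finally show ?case by (simp add: tr_tr algebra_simps)
qed

lemma act_ipow_c: "valid T m n nf \<Longrightarrow> act T m n (ipow cw i) nf = tr T (i, 0) nf"
proof (cases "0 \<le> i")
  case True
  assume v: "valid T m n nf"
  show ?thesis using act_rep_tr[of T cw "(1,0)" nf "nat i"] act_c v True by (simp add: ipow_def)
next
  case False
  assume v: "valid T m n nf"
  show ?thesis using act_rep_tr[of T "winv cw" "(-1,0)" nf "nat (-i)"] act_ci v False by (simp add: ipow_def)
qed

lemma act_ipow_d: "valid T m n nf \<Longrightarrow> act T m n (ipow dw j) nf = tr T (0, j) nf"
proof (cases "0 \<le> j")
  case True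
  assume v: "valid T m n nf"
  show ?thesis using act_rep_tr[of T dw "(0,1)" nf "nat j"] act_d v True by (simp add: ipow_def)
next
  case False
  assume v: "valid T m n nf"
  show ?thesis using act_rep_tr[of T "winv dw" "(0,-1)" nf "nat (-j)"] act_di v False by (simp add: ipow_def)
qed

lemma act_x0: "valid T m n nf \<Longrightarrow> act T m n (ipow cw i @ ipow dw j) nf = tr T (i, j) nf"
  using act_ipow_c act_ipow_d valid_tr tr_tr by simp

lemma rml_mdl: "rml T (mdl T ys) v = (mdl T (fst (rml 0 ys v)), snd (rml 0 ys v))"
proof (induction ys)
  case (Cons y ys)
  obtain t r s where y: "y = (t,r,s)" by (cases y)
  obtain ys' i j where R: "rml 0 ys v = (ys', (i,j))" by (rule rml_ex)
  show ?case using Cons R unfolding y by simp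
qed simp

lemma rmul_md: "rmul T (md_nf T nf) v = md_nf T (rmul 0 nf v)"
proof -
  obtain p q ys where e: "nf = ((p,q),ys)" by (rule nf_ex)
  obtain ys' i j where R: "rml 0 ys v = (ys', (i,j))" by (rule rml_ex)
  show ?thesis using rml_mdl[of T ys v] R unfolding e by simp
qed

lemma tr_md: "tr T a (md_nf T nf) = md_nf T (tr 0 a nf)"
  by (cases nf rule: nf_ex; cases a) simp

lemma rml_cong: "md T i = md T i' \<Longrightarrow> md T j = md T j' \<Longrightarrow>
  fst (rml T ys (i,j)) = fst (rml T ys (i',j')) \<and>
  md T (fst (snd (rml T ys (i,j)))) = md T (fst (snd (rml T ys (i',j')))) \<and>
  md T (snd (snd (rml T ys (i,j)))) = md T (snd (snd (rml T ys (i',j'))))"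
proof (induction ys)
  case (Cons y ys)
  obtain t r s where y: "y = (t,r,s)" by (cases y)
  obtain ys1 i1 j1 where R1: "rml T ys (i,j) = (ys1, (i1,j1))" by (rule rml_ex)
  obtain ys2 i2 j2 where R2: "rml T ys (i',j') = (ys2, (i2,j2))" by (rule rml_ex)
  have "md T (s + i1) = md T (s + i2)" "md T (s + j1) = md T (s + j2)"
    using Cons R1 R2 by (metis fst_conv snd_conv md_addR)+
  then show ?case using Cons R1 R2 unfolding y by auto
qed simp

lemma rmul_cong: "md T i = md T i' \<Longrightarrow> md T j = md T j' \<Longrightarrow> rmul T nf (i,j) = rmul T nf (i',j')"
proof -
  assume a: "md T i = md T i'" "md T j = md T j'"
  obtain p q ys where e: "nf = ((p,q),ys)" by (rule nf_ex)
  obtain ys1 i1 j1 where R1: "rml T ys (i,j) = (ys1, (i1,j1))" by (rule rml_ex)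
  obtain ys2 i2 j2 where R2: "rml T ys (i',j') = (ys2, (i2,j2))" by (rule rml_ex)
  have "md T (p + i1) = md T (p + i2)" "md T (q + j1) = md T (q + j2)"
    using rml_cong[OF a, of ys] R1 R2 by (metis fst_conv snd_conv md_addR)+
  then show ?thesis using rml_cong[OF a, of ys] R1 R2 unfolding e by simp
qed

lemma tr_cong: "md T i = md T i' \<Longrightarrow> md T j = md T j' \<Longrightarrow> tr T (i,j) nf = tr T (i',j') nf"
  by (cases nf rule: nf_ex) (metis tr.simps md_addR)

lemma rmul_both: "(\<exists>y\<in>set ys. fst y) \<Longrightarrow> (\<exists>y\<in>set ys. \<not> fst y) \<Longrightarrow>
   rmul T ((p,q),ys) v = ((md T p, md T q), fst (rml T ys v))"
proof -
  assume a: "\<exists>y\<in>set ys. fst y" "\<exists>y\<in>set ys. \<not> fst y"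
  obtain ys1 i1 j1 where R1: "rml T ys v = (ys1, (i1,j1))" by (rule rml_ex)
  show ?thesis using rml_carry[of ys T v] a R1 by simp
qed

lemma set_mdl: "map fst (mdl T ys) = map fst ys"
  by (induction ys rule: mdl.induct) auto

lemma sb_nonneg: "0 \<le> sb ys" by (induction ys rule: sb.induct) auto

lemma rml_bound: "\<bar>i\<bar> \<le> L \<Longrightarrow> \<bar>j\<bar> \<le> L \<Longrightarrow>
   sb (fst (rml 0 ys (i,j))) \<le> sb ys + L \<and> \<bar>fst (snd (rml 0 ys (i,j)))\<bar> \<le> L \<and> \<bar>snd (snd (rml 0 ys (i,j)))\<bar> \<le> L"
proof (induction ys)
  case (Cons y ys)
  obtain t r s where y: "y = (t,r,s)" by (cases y)
  obtain ys1 i1 j1 where R1: "rml 0 ys (i,j) = (ys1, (i1,j1))" by (rule rml_ex)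
  have L: "0 \<le> L" using Cons.prems by linarith
  show ?case using Cons R1 L sb_nonneg[of ys] unfolding y by (auto simp: abs_le_iff max_def)
qed simp

lemma mdl_Cons': "mdl T (z # zs) = (fst z, fst (snd z), md T (snd (snd z))) # mdl T zs"
  by (cases z) simp

lemma mdl_inj: "mdl T ys = mdl T zs \<Longrightarrow> sb ys \<le> K \<Longrightarrow> sb zs \<le> K \<Longrightarrow> 2 * K < int T \<Longrightarrow> ys = zs"
proof (induction ys arbitrary: zs)
  case Nil thus ?case by (cases zs) (auto simp: mdl_Cons')
next
  case (Cons y ys)
  obtain t r s where y: "y = (t,r,s)" by (cases y)
  obtain z zs' where zs: "zs = z # zs'" using Cons.prems by (cases zs) (auto simp: y)
  obtain t' r' s' where z: "z = (t',r',s')" by (cases z)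
  have "s = s'" using Cons.prems md_inj[of T s s' K] unfolding y zs z by auto
  moreover have "ys = zs'" using Cons unfolding y zs z by auto
  ultimately show ?case using Cons.prems unfolding y zs z by auto
qed

lemma md_nf_inj: "md_nf T X = md_nf T Y \<Longrightarrow> eb X \<le> K \<Longrightarrow> eb Y \<le> K \<Longrightarrow> 2 * K < int T \<Longrightarrow> X = Y"
proof -
  assume a: "md_nf T X = md_nf T Y" "eb X \<le> K" "eb Y \<le> K" "2 * K < int T"
  obtain p q ys where X: "X = ((p,q),ys)" by (rule nf_ex)
  obtain p' q' ys' where Y: "Y = ((p',q'),ys')" by (rule nf_ex)
  have "p = p'" "q = q'" using a md_inj[of T p p' K] md_inj[of T q q' K] unfolding X Y by auto
  moreover have "ys = ys'" using a mdl_inj[of T ys ys' K] unfolding X Y by auto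
  ultimately show ?thesis unfolding X Y by simp
qed

lemma types_mdl: "(\<exists>y\<in>set (mdl T ys). P (fst y)) = (\<exists>y\<in>set ys. P (fst y))"
  by (induction T ys rule: mdl.induct) auto

lemma eb_ge: "\<bar>p\<bar> \<le> eb ((p,q),ys)" "\<bar>q\<bar> \<le> eb ((p,q),ys)" "sb ys \<le> eb ((p,q),ys)"
  by (simp_all add: le_max_iff_disj)

lemma main:
  assumes el: "elength m n g > 1"
    and nc: "\<not> sub_conj (rels_G m n) {cw, dw} f g"
  shows "\<exists>t::nat. t > 1 \<and> \<not> sub_conj (rels_Gt m n t) {cw, dw} f g"
proof -
  define e0 :: nf where "e0 = ((0,0),[])"
  obtain pF qF ysF where F: "act 0 m n f e0 = ((pF,qF),ysF)" by (rule nf_ex)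
  obtain pG qG ysG where G: "act 0 m n g e0 = ((pG,qG),ysG)" by (rule nf_ex)
  have tyG: "\<exists>y\<in>set ysG. fst y" "\<exists>y\<in>set ysG. \<not> fst y" using elength_types[OF el] G unfolding e0_def by auto
  obtain Bf where Bf: "\<forall>k. zb (act 0 m n (drop k f) e0) \<le> Bf" using bound_ex by blast
  obtain Bg where Bg: "\<forall>k. zb (act 0 m n (drop k g) e0) \<le> Bg" using bound_ex by blast
  define B where "B = max (max Bf Bg) (max (eb ((pF,qF),ysF)) (eb ((pG,qG),ysG)))"
  have B0: "0 \<le> B" unfolding B_def by (simp add: le_max_iff_disj)
  have BF: "eb ((pF,qF),ysF) \<le> B" and BG: "eb ((pG,qG),ysG) \<le> B" unfolding B_def
    by (simp_all add: le_max_iff_disj del: eb.simps)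
  define T where "T = nat (6 * B + 2)"
  have Tint: "int T = 6 * B + 2" using B0 by (simp add: T_def)
  have T1: "T > 1" using B0 Tint by linarith
  have ve0: "valid T m n e0" "valid 0 m n e0" by (simp_all add: e0_def valid.simps)
  have mde0: "md_nf T e0 = e0" by (simp add: e0_def)
  have zf: "\<forall>k. zb (act 0 m n (drop k f) e0) < int T"
  proof
    fix k show "zb (act 0 m n (drop k f) e0) < int T" using Bf[rule_format, of k] Tint B_def B0 by linarith
  qed
  have zg: "\<forall>k. zb (act 0 m n (drop k g) e0) < int T"
  proof
    fix k show "zb (act 0 m n (drop k g) e0) < int T" using Bg[rule_format, of k] Tint B_def B0 by linarith
  qed
  have actF: "act T m n f e0 = md_nf T ((pF,qF),ysF)" using act_md[OF zf] mde0 F by simp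
  have actG: "act T m n g e0 = md_nf T ((pG,qG),ysG)" using act_md[OF zg] mde0 G by simp
  have vG0: "valid 0 m n ((pG,qG),ysG)" using valid_act[OF ve0(2), of g] G by simp
  define v01 where "v01 = pG - pF"
  define v02 where "v02 = qG - qF"
  define ys' where "ys' = fst (rml 0 ysG (v01, v02))"
  define W where "W = ((pF,qF), ys')"
  have W_eq: "tr 0 (- v01, - v02) (rmul 0 ((pG,qG),ysG) (v01, v02)) = W"
    using rmul_both[OF tyG, of 0 pG qG "(v01,v02)"] unfolding W_def ys'_def v01_def v02_def by simp
  show ?thesis
  proof (intro exI conjI)
    show "T > 1" by (rule T1)
    show "\<not> sub_conj (rels_Gt m n T) {cw, dw} f g"
    proof
      assume "sub_conj (rels_Gt m n T) {cw, dw} f g"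
      then obtain x where xg: "x \<in> gen_words {cw,dw}" and xe: "eqp (rels_Gt m n T) f (winv x @ g @ x)"
        unfolding sub_conj_def by blast
      obtain v where v: "\<forall>nf. valid T m n nf \<longrightarrow> act T m n x nf = tr T v nf" using gw_tr[OF xg] by blast
      obtain v1 v2 where vv: "v = (v1,v2)" by (cases v)
      define GT where "GT = md_nf T ((pG,qG),ysG)"
      define Y where "Y = rmul T GT (v1,v2)"
      have vGT: "valid T m n GT" using valid_act[OF ve0(1), of g] actG unfolding GT_def by simp
      have vY: "valid T m n Y" unfolding Y_def using valid_rmul[OF vGT] .
      have ax: "act T m n x e0 = rmul T e0 (v1,v2)" using v ve0(1) unfolding vv by (simp add: e0_def)
      have "act T m n x (tr T (-v1,-v2) Y) = tr T v (tr T (-v1,-v2) Y)"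
        using v[rule_format, OF valid_tr[OF vY, of "(-v1,-v2)"]] .
      also have "\<dots> = tr T (0,0) Y" unfolding vv tr_tr by simp
      also have "\<dots> = Y" using tr_0[OF vY] .
      finally have Yx: "act T m n x (tr T (-v1,-v2) Y) = Y" .
      have "md_nf T ((pF,qF),ysF) = act T m n (winv x @ g @ x) e0" using act_inv[OF xe ve0(1)] actF by simp
      also have "\<dots> = act T m n (winv x) (act T m n g (rmul T e0 (v1,v2)))" using ax by simp
      also have "\<dots> = act T m n (winv x) Y" using act_rmul[OF ve0(1)] actG unfolding Y_def GT_def by simp
      also have "\<dots> = tr T (-v1,-v2) Y" using act_winv[OF valid_tr[OF vY]] Yx by metis
      finally have eq1: "md_nf T ((pF,qF),ysF) = tr T (-v1,-v2) Y" .
      have tyGT: "\<exists>y\<in>set (mdl T ysG). fst y" "\<exists>y\<in>set (mdl T ysG). \<not> fst y"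
        using tyG types_mdl[of T ysG "\<lambda>x. x"] types_mdl[of T ysG "\<lambda>x. \<not> x"] by auto
      have "Y = ((md T pG, md T qG), fst (rml T (mdl T ysG) (v1,v2)))"
        using rmul_both[OF tyGT] unfolding Y_def GT_def by simp
      then have zz: "md T pF = md T (pG - v1)" "md T qF = md T (qG - v2)" using eq1 by simp_all
      have c1: "md T v1 = md T v01" "md T v2 = md T v02"
      proof -
        have "md T v1 = md T (pG - md T (pG - v1))" by simp
        also have "\<dots> = md T (pG - md T pF)" using zz by simp
        finally show "md T v1 = md T v01" by (simp add: v01_def)
        have "md T v2 = md T (qG - md T (qG - v2))" by simp
        also have "\<dots> = md T (qG - md T qF)" using zz by simp
        finally show "md T v2 = md T v02" by (simp add: v02_def)
      qed
      have c2: "md T (-v1) = md T (-v01)" "md T (-v2) = md T (-v02)"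
      proof -
        have "md T (-v1) = md T (0 - md T v1)" by simp
        also have "\<dots> = md T (0 - md T v01)" using c1 by simp
        finally show "md T (-v1) = md T (-v01)" by simp
        have "md T (-v2) = md T (0 - md T v2)" by simp
        also have "\<dots> = md T (0 - md T v02)" using c1 by simp
        finally show "md T (-v2) = md T (-v02)" by simp
      qed
      have "tr T (-v1,-v2) Y = tr T (-v01,-v02) (rmul T GT (v01,v02))"
        unfolding Y_def using tr_cong[OF c2] rmul_cong[OF c1] by metis
      also have "\<dots> = md_nf T W" unfolding GT_def using rmul_md tr_md W_eq by metis
      finally have eq2: "md_nf T ((pF,qF),ysF) = md_nf T W" using eq1 by simp
      have bv: "\<bar>v01\<bar> \<le> 2 * B" "\<bar>v02\<bar> \<le> 2 * B"
        using BF BG eb_ge[where p=pF and q=qF and ys=ysF] eb_ge[where p=pG and q=qG and ys=ysG] unfolding v01_def v02_def by linarith+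
      have "sb ys' \<le> sb ysG + 2 * B" using rml_bound[OF bv, of ysG] unfolding ys'_def by simp
      moreover have "\<bar>pF\<bar> \<le> B" "\<bar>qF\<bar> \<le> B" "sb ysG \<le> B"
        using BF BG eb_ge[where p=pF and q=qF and ys=ysF] eb_ge[where p=pG and q=qG and ys=ysG] by linarith+
      ultimately have "eb W \<le> 3 * B" using B0 unfolding W_def eb.simps by (simp only: max.bounded_iff) linarith
      moreover have "eb ((pF,qF),ysF) \<le> 3 * B" using BF B0 by linarith
      moreover have "2 * (3 * B) < int T" using Tint by linarith
      ultimately have FW: "((pF,qF),ysF) = W" using md_nf_inj[OF eq2] by blast
      define x0 where "x0 = ipow cw v01 @ ipow dw v02"
      have x0g: "x0 \<in> gen_words {cw, dw}" unfolding x0_def by (auto intro!: gw_app gw_ipow)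
      define Y0 where "Y0 = rmul 0 ((pG,qG),ysG) (v01, v02)"
      have vY0: "valid 0 m n Y0" unfolding Y0_def using valid_rmul[OF vG0] .
      have WY: "W = tr 0 (- v01, - v02) Y0" using W_eq unfolding Y0_def by simp
      have vW: "valid 0 m n W" unfolding WY using valid_tr[OF vY0] .
      have "act 0 m n x0 W = tr 0 (v01, v02) W" using act_x0[OF vW, of v01 v02] unfolding x0_def .
      also have "\<dots> = tr 0 (0, 0) Y0" unfolding WY tr_tr by simp
      also have "\<dots> = Y0" using tr_0[OF vY0] .
      finally have Wx: "act 0 m n x0 W = Y0" .
      have "act 0 m n (winv x0 @ g @ x0) e0 = act 0 m n (winv x0) (act 0 m n g (rmul 0 e0 (v01, v02)))"
        using act_x0[OF ve0(2), of v01 v02] unfolding x0_def by (simp add: e0_def)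
      also have "\<dots> = act 0 m n (winv x0) Y0" using act_rmul[OF ve0(2)] G unfolding Y0_def by simp
      also have "\<dots> = W" using act_winv[OF vW] Wx by metis
      finally have "act 0 m n (winv x0 @ g @ x0) e0 = act 0 m n f e0" using F FW by simp
      then have s2: "E (winv x0 @ g @ x0) (word_of m n (act 0 m n f e0))"
        using sound[of "winv x0 @ g @ x0"] unfolding e0_def by simp
      have s1: "E f (word_of m n (act 0 m n f e0))" using sound[of f] unfolding e0_def .
      have "E f (winv x0 @ g @ x0)" using eqp_tr[OF s1 eqp_sy[OF s2]] .
      then show False using nc x0g unfolding sub_conj_def by blast
    qed
  qed
qed

end

theorem proposition3p1:
  fixes m n :: nat and f g :: word
  assumes "m > 1" and "n > 1"
    and "elength m n f = elength m n g" and "elength m n g > 1"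
    and "\<not> sub_conj (rels_G m n) {c_word m, d_word n} f g"
  shows "\<exists>t::nat. t > 1 \<and>
           \<not> sub_conj (rels_Gt m n t) {c_word m, d_word n} f g"
proof -
  interpret grp m n using assms(1,2) by unfold_locales
  show ?thesis using main[OF assms(4) assms(5)] .
qed

end
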